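(* Let $R$ be a ring such that the polynomial ring $R[t]$ in one indeterminate is Cohen-Macaulay. Then $R$ is Cohen-Macaulay.
   Context: All rings are commutative with identity. For $x\in R$ let $C(x)$ be the complex $0\to R\to R_x\to 0$ ($R$ in degree $0$, natural localization map); for a finite sequence $\mathbf x=x_1,\dots,x_\ell$ put $C(\mathbf x)=C(x_1)\otimes_R\cdots\otimes_R C(x_\ell)$ and let $H^i_{\mathbf x}(M)$ be the $i$th cohomology of $C(\mathbf x)\otimes_R M$; $\ell(\mathbf x)=\ell$. Let $K(x)$ be $0\to R\xrightarrow{x}R\to 0$ (degrees $1,0$), $K(\mathbf x)=K(x_1)\otimes\cdots\otimes K(x_\ell)$, $H_i(\mathbf x)$ its homology. For $m\ge n$ the chain map $K(\mathbf x^m)\to K(\mathbf x^n)$ ($\mathbf x^m=x_1^m,\dots,x_\ell^m$) is the tensor product of the maps $K(x_i^m)\to K(x_i^n)$ given by multiplication by $x_i^{m-n}$ in degree $1$ and identity in degree $0$. $\mathbf x$ is weakly proregular if for every $n$ there is $m\ge n$ with $H_i(\mathbf x^m)\to H_i(\mathbf x^n)$ zero for all $i\ge1$. $\mathbf x$ is a parameter sequence on $R$ if it is weakly proregular, $(\mathbf x)R\neq R$, and $H^{\ell(\mathbf x)}_{\mathbf x}(R)_p\neq0$ for every prime $p\supseteq(\mathbf x)R$ (the empty sequence is a parameter sequence). It is a strong parameter sequence if $x_1,\dots,x_i$ is a parameter sequence for each $i=1,\dots,\ell(\mathbf x)$. A regular sequence on $M$: each $x_i$ is a non-zero-divisor on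 $M/(x_1,\dots,x_{i-1})M$ and $M\neq(\mathbf x)M$. A ring $R$ is Cohen-Macaulay if every strong parameter sequence on $R$ is a regular sequence on $R$. *)

theory Defs
  imports "HOL-Computational_Algebra.Polynomial"
begin

text \<open>A finite sequence x_1,...,x_l in R is a list xs (x_{i+1} = xs!i).
  The ideal (x)R generated by the sequence.\<close>
definition gen_ideal :: "'a::comm_ring_1 list \<Rightarrow> 'a set" where
  "gen_ideal xs = {r. \<exists>c. r = (\<Sum>i<length xs. c i * xs ! i)}"

definition prime_ideal :: "'a::comm_ring_1 set \<Rightarrow> bool" where
  "prime_ideal P \<longleftrightarrow> 0 \<in> P \<and> (\<forall>a\<in>P. \<forall>b\<in>P. a + b \<in> P) \<and>
     (\<forall>a\<in>P. \<forall>r. r * a \<in> P) \<and> 1 \<notin> P \<and> (\<forall>a b. a * b \<in> P \<longrightarrow> a \<in> P \<or> b \<in> P)"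

text \<open>Koszul complex K(x) = K(x_1) \<otimes> ... \<otimes> K(x_l): the degree-i module is free on the
  basis e_S, S a subset of {0..<l} with card S = i.\<close>
definition koszul_chain :: "'a::comm_ring_1 list \<Rightarrow> nat \<Rightarrow> (nat set \<Rightarrow> 'a) \<Rightarrow> bool" where
  "koszul_chain xs i c \<longleftrightarrow> (\<forall>S. c S \<noteq> 0 \<longrightarrow> S \<subseteq> {..<length xs} \<and> card S = i)"

text \<open>Differential: d(e_S) = sum over j in S of (-1)^(#{k in S. k < j}) x_j e_(S - {j}).\<close>
definition koszul_d :: "'a::comm_ring_1 list \<Rightarrow> (nat set \<Rightarrow> 'a) \<Rightarrow> (nat set \<Rightarrow> 'a)" where
  "koszul_d xs c = (\<lambda>T. \<Sum>j\<in>{..<length xs} - T.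
       (-1) ^ card {k\<in>T. k < j} * xs ! j * c (insert j T))"

definition pow_seq :: "'a::comm_ring_1 list \<Rightarrow> nat \<Rightarrow> 'a list" where
  "pow_seq xs m = map (\<lambda>x. x ^ m) xs"

text \<open>The chain map K(x^m) -> K(x^n), tensor product of (x_j^(m-n) in degree 1, id in degree 0):
  e_S |-> (prod_{j in S} x_j^(m-n)) e_S.\<close>
definition koszul_map :: "'a::comm_ring_1 list \<Rightarrow> nat \<Rightarrow> nat \<Rightarrow> (nat set \<Rightarrow> 'a) \<Rightarrow> (nat set \<Rightarrow> 'a)" where
  "koszul_map xs m n c = (\<lambda>S. (\<Prod>j\<in>S. (xs ! j) ^ (m - n)) * c S)"

text \<open>Weak proregularity: the induced maps H_i(x^m) -> H_i(x^n), i >= 1, are zero, i.e.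
  every i-cycle of K(x^m) is mapped to an i-boundary of K(x^n).\<close>
definition weakly_proregular :: "'a::comm_ring_1 list \<Rightarrow> bool" where
  "weakly_proregular xs \<longleftrightarrow> (\<forall>n. \<exists>m\<ge>n. \<forall>i\<ge>1. \<forall>c.
      koszul_chain (pow_seq xs m) i c \<and> koszul_d (pow_seq xs m) c = (\<lambda>_. 0) \<longrightarrow>
      (\<exists>b. koszul_chain (pow_seq xs n) (Suc i) b \<and>
           koszul_d (pow_seq xs n) b = koszul_map xs m n c))"

text \<open>Top Cech cohomology H^l_x(R): cokernel of the last differential of C(x)
  (degree l-1 component: direct sum over i of R_{y_i}, y_i = product of x_j, j ~= i;
   degree l component: R_{x_1} \<otimes> ... \<otimes> R_{x_l} = R_y, y = x_1 ... x_l).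
  An element of R_y is written r / y^k; (r,k) and (r',k') are equal iff
  y^N (r y^k' - r' y^k) = 0 for some N. The localisation map R_{y_i} -> R_y sends
  a / y_i^K to a x_i^K / y^K. Hence the class of r / y^k in H^l is zero iff:\<close>
definition cech_top_zero :: "'a::comm_ring_1 list \<Rightarrow> 'a \<Rightarrow> nat \<Rightarrow> bool" where
  "cech_top_zero xs r k \<longleftrightarrow> (\<exists>N K a. (prod_list xs) ^ N *
      (r * (prod_list xs) ^ K - (\<Sum>i<length xs. a i * (xs ! i) ^ K) * (prod_list xs) ^ k) = 0)"

text \<open>H^l_x(R)_P \<noteq> 0: some element of H^l_x(R) is not killed by any s outside P.\<close>
definition cech_top_loc_nonzero :: "'a::comm_ring_1 list \<Rightarrow> 'a set \<Rightarrow> bool" where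
  "cech_top_loc_nonzero xs P \<longleftrightarrow> (\<exists>r k. \<forall>s. s \<notin> P \<longrightarrow> \<not> cech_top_zero xs (s * r) k)"

definition parameter_seq :: "'a::comm_ring_1 list \<Rightarrow> bool" where
  "parameter_seq xs \<longleftrightarrow> weakly_proregular xs \<and> gen_ideal xs \<noteq> UNIV \<and>
     (\<forall>P. prime_ideal P \<and> gen_ideal xs \<subseteq> P \<longrightarrow> cech_top_loc_nonzero xs P)"

definition strong_parameter_seq :: "'a::comm_ring_1 list \<Rightarrow> bool" where
  "strong_parameter_seq xs \<longleftrightarrow> (\<forall>i\<in>{1..length xs}. parameter_seq (take i xs))"

definition regular_seq :: "'a::comm_ring_1 list \<Rightarrow> bool" where
  "regular_seq xs \<longleftrightarrow> (\<forall>i<length xs. \<forall>r. xs ! i * r \<in> gen_ideal (take i xs) \<longrightarrow>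
       r \<in> gen_ideal (take i xs)) \<and> gen_ideal xs \<noteq> UNIV"

definition cohen_macaulay :: "'a::comm_ring_1 itself \<Rightarrow> bool" where
  "cohen_macaulay _ \<longleftrightarrow> (\<forall>xs :: 'a list. strong_parameter_seq xs \<longrightarrow> regular_seq xs)"

end

theory Submission
  imports Defs
begin

abbreviation cp :: "'a::comm_ring_1 list \<Rightarrow> 'a poly list" where
  "cp xs \<equiv> map (\<lambda>x. [:x:]) xs"

lemma pow_seq_cp: "pow_seq (cp xs) m = cp (pow_seq xs m)"
  by (simp add: pow_seq_def poly_const_pow)

lemma sum_const_poly: "(\<Sum>i\<in>A. [:f i:]) = [:\<Sum>i\<in>A. f i:]"
  by (induction A rule: infinite_finite_induct) auto

lemma neg_one_pow_poly: "(-1::'a::comm_ring_1 poly) ^ k = [:(-1)^k:]"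
proof -
  have "(-1::'a poly) = [:-1:]" by (simp add: one_pCons)
  then show ?thesis by (simp add: poly_const_pow)
qed

lemma gen_ideal_cp_in: "a \<in> gen_ideal xs \<Longrightarrow> [:a:] \<in> gen_ideal (cp xs)"
proof -
  assume "a \<in> gen_ideal xs"
  then obtain c where c: "a = (\<Sum>i<length xs. c i * xs ! i)" by (auto simp: gen_ideal_def)
  have "[:a:] = (\<Sum>i<length xs. [:c i * xs ! i:])"
    unfolding c by (simp add: sum_const_poly)
  also have "\<dots> = (\<Sum>i<length xs. [:c i:] * cp xs ! i)"
    by (simp add: mult.commute)
  finally have "[:a:] = (\<Sum>i<length xs. [:c i:] * cp xs ! i)" .
  then show ?thesis unfolding gen_ideal_def length_map mem_Collect_eq by (rule exI[of _ "\<lambda>i. [:c i:]"])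
qed

lemma gen_ideal_cp_coeff: "p \<in> gen_ideal (cp xs) \<Longrightarrow> coeff p j \<in> gen_ideal xs"
proof -
  assume "p \<in> gen_ideal (cp xs)"
  then obtain c where c: "p = (\<Sum>i<length xs. c i * cp xs ! i)" by (auto simp: gen_ideal_def)
  have "coeff p j = (\<Sum>i<length xs. coeff (c i) j * xs ! i)"
    unfolding c by (simp add: coeff_sum mult.commute)
  then show ?thesis by (auto simp: gen_ideal_def)
qed

lemma gen_ideal_mult: "a \<in> gen_ideal xs \<Longrightarrow> p * a \<in> gen_ideal xs"
proof -
  assume "a \<in> gen_ideal xs"
  then obtain c where c: "a = (\<Sum>i<length xs. c i * xs ! i)" by (auto simp: gen_ideal_def)
  have "p * a = (\<Sum>i<length xs. (p * c i) * xs ! i)"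
    unfolding c by (simp add: sum_distrib_left mult.assoc)
  then show ?thesis by (auto simp: gen_ideal_def)
qed

lemma gen_ideal_cp_UNIV: "gen_ideal xs \<noteq> UNIV \<Longrightarrow> gen_ideal (cp xs) \<noteq> UNIV"
proof
  assume a: "gen_ideal xs \<noteq> UNIV" "gen_ideal (cp xs) = UNIV"
  then have "1 \<in> gen_ideal xs" using gen_ideal_cp_coeff[of 1 xs 0] by auto
  then have "x * 1 \<in> gen_ideal xs" for x using gen_ideal_mult by blast
  with a show False by auto
qed

lemma gen_ideal_UNIV_cp: "gen_ideal (cp xs) \<noteq> UNIV \<Longrightarrow> gen_ideal xs \<noteq> UNIV"
proof
  assume a: "gen_ideal (cp xs) \<noteq> UNIV" "gen_ideal xs = UNIV"
  then have "[:1:] \<in> gen_ideal (cp xs)" using gen_ideal_cp_in[of 1 xs] by auto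
  then have "p * [:1:] \<in> gen_ideal (cp xs)" for p using gen_ideal_mult by blast
  with a show False by auto
qed

lemma koszul_d_coeff:
  "coeff (koszul_d (cp ys) c T) j = koszul_d ys (\<lambda>S. coeff (c S) j) T"
proof -
  have e: "(-1::'a poly) ^ k * [:y:] * p = smult ((-1) ^ k * y) p" for k y and p :: "'a poly"
    by (simp add: neg_one_pow_poly mult.commute)
  show ?thesis
    unfolding koszul_d_def coeff_sum length_map by (intro sum.cong refl) (simp add: neg_one_pow_poly algebra_simps)
qed

lemma koszul_map_coeff:
  assumes "\<forall>S. c S \<noteq> 0 \<longrightarrow> S \<subseteq> {..<length xs}"
  shows "coeff (koszul_map (cp xs) m n c S) j = koszul_map xs m n (\<lambda>S. coeff (c S) j) S"
proof (cases "c S = 0")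
  case True
  then show ?thesis by (simp add: koszul_map_def)
next
  case False
  then have S: "S \<subseteq> {..<length xs}" using assms by auto
  have "(\<Prod>i\<in>S. cp xs ! i ^ (m - n)) = (\<Prod>i\<in>S. [:xs ! i ^ (m - n):])"
    using S by (intro prod.cong) (auto simp: poly_const_pow)
  also have "\<dots> = [:\<Prod>i\<in>S. xs ! i ^ (m - n):]" by (rule prod_to_poly)
  finally show ?thesis by (simp add: koszul_map_def)
qed

lemma wpr_cp:
  assumes "weakly_proregular xs"
  shows "weakly_proregular (cp xs)"
  unfolding weakly_proregular_def pow_seq_cp
proof (intro allI)
  fix n
  obtain m where m: "m \<ge> n" and H: "\<forall>i\<ge>1. \<forall>c. koszul_chain (pow_seq xs m) i c \<and> koszul_d (pow_seq xs m) c = (\<lambda>_. 0) \<longrightarrow>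
      (\<exists>b. koszul_chain (pow_seq xs n) (Suc i) b \<and>
           koszul_d (pow_seq xs n) b = koszul_map xs m n c)"
    using assms unfolding weakly_proregular_def by blast
  show "\<exists>m\<ge>n. \<forall>i\<ge>1. \<forall>c. koszul_chain (cp (pow_seq xs m)) i c \<and> koszul_d (cp (pow_seq xs m)) c = (\<lambda>_. 0) \<longrightarrow>
      (\<exists>b. koszul_chain (cp (pow_seq xs n)) (Suc i) b \<and>
           koszul_d (cp (pow_seq xs n)) b = koszul_map (cp xs) m n c)"
  proof (intro exI[of _ m] conjI m allI impI, elim conjE)
    fix i c assume i: "1 \<le> i" and ch: "koszul_chain (cp (pow_seq xs m)) i c"
      and cy: "koszul_d (cp (pow_seq xs m)) c = (\<lambda>_. 0)"
    define ck where "ck j = (\<lambda>S. coeff (c S) j)" for j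
    have chk: "koszul_chain (pow_seq xs m) i (ck j)" for j
      using ch unfolding koszul_chain_def ck_def by (simp add: pow_seq_def) (metis coeff_0)
    have cyk: "koszul_d (pow_seq xs m) (ck j) = (\<lambda>_. 0)" for j
    proof
      fix T show "koszul_d (pow_seq xs m) (ck j) T = 0"
        using arg_cong[OF cy, of "\<lambda>f. coeff (f T) j"] koszul_d_coeff[of "pow_seq xs m" c T j]
        unfolding ck_def by simp
    qed
    have "\<forall>j. \<exists>b. koszul_chain (pow_seq xs n) (Suc i) b \<and> koszul_d (pow_seq xs n) b = koszul_map xs m n (ck j)"
      using H i chk cyk by blast
    then obtain B where B: "\<And>j. koszul_chain (pow_seq xs n) (Suc i) (B j)"
      "\<And>j. koszul_d (pow_seq xs n) (B j) = koszul_map xs m n (ck j)" by metis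
    have supp: "\<forall>S. c S \<noteq> 0 \<longrightarrow> S \<subseteq> {..<length xs}"
      using ch by (auto simp: koszul_chain_def pow_seq_def)
    define D where "D = Max ((\<lambda>S. degree (c S)) ` Pow {..<length xs})"
    have degD: "degree (c S) \<le> D" for S
    proof (cases "c S = 0")
      case True then show ?thesis by simp
    next
      case False
      then have "S \<in> Pow {..<length xs}" using supp by auto
      then show ?thesis unfolding D_def by (intro Max_ge) auto
    qed
    define B' where "B' j = (if j \<le> D then B j else (\<lambda>_. 0))" for j
    define b where "b S = (\<Sum>j\<le>D. monom (B' j S) j)" for S
    have cb: "coeff (b S) j = B' j S" for S j
      unfolding b_def coeff_sum coeff_monom by (auto simp: B'_def)
    show "\<exists>b. koszul_chain (cp (pow_seq xs n)) (Suc i) b \<and>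
           koszul_d (cp (pow_seq xs n)) b = koszul_map (cp xs) m n c"
    proof (intro exI[of _ b] conjI)
      show "koszul_chain (cp (pow_seq xs n)) (Suc i) b"
        unfolding koszul_chain_def
      proof (intro allI impI)
        fix S assume "b S \<noteq> 0"
        then obtain j where "coeff (b S) j \<noteq> 0" using poly_eq_iff[of "b S" 0] by auto
        hence "B' j S \<noteq> 0" by (simp add: cb)
        hence "B j S \<noteq> 0" by (auto simp: B'_def split: if_splits)
        thus "S \<subseteq> {..<length (cp (pow_seq xs n))} \<and> card S = Suc i"
          using B(1)[of j] by (auto simp: koszul_chain_def pow_seq_def)
      qed
      show "koszul_d (cp (pow_seq xs n)) b = koszul_map (cp xs) m n c"
      proof (rule ext, rule poly_eqI)
        fix T j
        have "coeff (koszul_d (cp (pow_seq xs n)) b T) j = koszul_d (pow_seq xs n) (B' j) T"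
          by (simp add: koszul_d_coeff cb)
        also have "\<dots> = koszul_map xs m n (ck j) T"
        proof (cases "j \<le> D")
          case True thus ?thesis by (simp add: B'_def B(2))
        next
          case False
          then have "ck j = (\<lambda>_. 0)" unfolding ck_def using degD
            by (intro ext coeff_eq_0) (meson le_trans not_le)
          with False show ?thesis by (simp add: B'_def koszul_d_def koszul_map_def)
        qed
        also have "\<dots> = coeff (koszul_map (cp xs) m n c T) j"
          using koszul_map_coeff[OF supp] by (simp add: ck_def)
        finally show "coeff (koszul_d (cp (pow_seq xs n)) b T) j = coeff (koszul_map (cp xs) m n c T) j" .
      qed
    qed
  qed
qed

lemma prod_list_cp: "prod_list (cp xs) = [:prod_list xs:]"
  by (induction xs) (auto simp: one_pCons)

lemma const_mult_poly: "[:a:] * q = smult a q"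
  by simp

lemma ideal_sum:
  assumes "prime_ideal P" "\<And>i. i \<in> A \<Longrightarrow> f i \<in> P"
  shows "sum f A \<in> P"
  using assms(2)
proof (induction A rule: infinite_finite_induct)
  case (infinite A) then show ?case using assms(1) by (simp add: prime_ideal_def)
next
  case empty then show ?case using assms(1) by (simp add: prime_ideal_def)
next
  case (insert x F) then show ?case using assms(1) by (simp add: prime_ideal_def)
qed

lemma contract_prime:
  assumes "prime_ideal (P :: 'a::comm_ring_1 poly set)"
  shows "prime_ideal {a. [:a:] \<in> P}"
  using assms unfolding prime_ideal_def
  apply (intro conjI)
  apply simp
  apply (metis add_pCons add_0 mem_Collect_eq)
  apply (auto simp: one_pCons)
  apply (metis const_mult_poly smult_pCons smult_0_right)
  apply (metis const_mult_poly smult_pCons smult_0_right)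
  done

lemma coeff_notin:
  assumes "prime_ideal (P :: 'a::comm_ring_1 poly set)" "s \<notin> P"
  shows "\<exists>j. [:coeff s j:] \<notin> P"
proof (rule ccontr)
  assume "\<not> ?thesis"
  then have h: "[:coeff s j:] \<in> P" for j by auto
  have "(\<Sum>i\<le>degree s. monom (coeff s i) i) \<in> P"
  proof (rule ideal_sum[OF assms(1)])
    fix i
    have "monom (coeff s i) i = monom 1 i * [:coeff s i:]"
      by (simp add: smult_monom mult.commute)
    then show "monom (coeff s i) i \<in> P" using h[of i] assms(1) unfolding prime_ideal_def by metis
  qed
  then show False using assms(2) by (simp add: poly_as_sum_of_monoms)
qed

lemma cech_coeff:
  assumes "cech_top_zero (cp xs) (s * [:r:]) k"
  shows "cech_top_zero xs (coeff s j * r) k"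
proof -
  let ?y = "prod_list xs"
  obtain N K a where e: "prod_list (cp xs) ^ N *
      (s * [:r:] * prod_list (cp xs) ^ K - (\<Sum>i<length (cp xs). a i * (cp xs ! i) ^ K) * prod_list (cp xs) ^ k) = 0"
    using assms unfolding cech_top_zero_def by blast
  have s1: "(\<Sum>i<length (cp xs). a i * (cp xs ! i) ^ K) = (\<Sum>i<length xs. smult (xs ! i ^ K) (a i))"
    by (intro sum.cong) (auto simp: poly_const_pow mult.commute)
  have "smult (?y ^ N) (smult (r * ?y ^ K) s - smult (?y ^ k) (\<Sum>i<length xs. smult (xs ! i ^ K) (a i))) = 0"
    using e unfolding s1 prod_list_cp poly_const_pow
    by (simp add: mult.commute mult.left_commute)
  then have "coeff (smult (?y ^ N) (smult (r * ?y ^ K) s - smult (?y ^ k) (\<Sum>i<length xs. smult (xs ! i ^ K) (a i)))) j = 0"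
    by simp
  then have "?y ^ N * (coeff s j * r * ?y ^ K - (\<Sum>i<length xs. (\<lambda>i. coeff (a i) j) i * xs ! i ^ K) * ?y ^ k) = 0"
    by (simp add: coeff_sum algebra_simps sum_distrib_left)
  then show ?thesis unfolding cech_top_zero_def
    by (intro exI[of _ N] exI[of _ K] exI[of _ "\<lambda>i. coeff (a i) j"])
qed

lemma param_cp:
  assumes "parameter_seq xs"
  shows "parameter_seq (cp xs)"
  unfolding parameter_seq_def
proof (intro conjI allI impI)
  show "weakly_proregular (cp xs)" using assms wpr_cp parameter_seq_def by blast
  show "gen_ideal (cp xs) \<noteq> UNIV" using assms gen_ideal_cp_UNIV parameter_seq_def by blast
  fix P :: "'a poly set"
  assume a: "prime_ideal P \<and> gen_ideal (cp xs) \<subseteq> P"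
  let ?p = "{a. [:a:] \<in> P}"
  have "prime_ideal ?p" using a contract_prime by blast
  moreover have "gen_ideal xs \<subseteq> ?p" using a gen_ideal_cp_in by blast
  ultimately have "cech_top_loc_nonzero xs ?p" using assms unfolding parameter_seq_def by blast
  then obtain r k where rk: "\<And>s. s \<notin> ?p \<Longrightarrow> \<not> cech_top_zero xs (s * r) k"
    unfolding cech_top_loc_nonzero_def by blast
  show "cech_top_loc_nonzero (cp xs) P"
    unfolding cech_top_loc_nonzero_def
  proof (intro exI[of _ "[:r:]"] exI[of _ k] allI impI notI)
    fix s assume "s \<notin> P" "cech_top_zero (cp xs) (s * [:r:]) k"
    then obtain j where "[:coeff s j:] \<notin> P" using coeff_notin a by blast
    then show False using rk[of "coeff s j"] cech_coeff[OF \<open>cech_top_zero (cp xs) (s * [:r:]) k\<close>] by auto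
  qed
qed

lemma regular_from_cp:
  assumes "regular_seq (cp xs)"
  shows "regular_seq xs"
  unfolding regular_seq_def
proof (intro conjI allI impI)
  show "gen_ideal xs \<noteq> UNIV" using assms gen_ideal_UNIV_cp regular_seq_def by blast
  fix i r assume i: "i < length xs" and h: "xs ! i * r \<in> gen_ideal (take i xs)"
  have "[:xs ! i * r:] \<in> gen_ideal (cp (take i xs))" using gen_ideal_cp_in[OF h] .
  moreover have "[:xs ! i * r:] = cp xs ! i * [:r:]" using i by simp
  ultimately have "cp xs ! i * [:r:] \<in> gen_ideal (take i (cp xs))" by (simp add: take_map)
  then have "[:r:] \<in> gen_ideal (take i (cp xs))" using assms i unfolding regular_seq_def length_map by blast
  then have "coeff [:r:] 0 \<in> gen_ideal (take i xs)" using gen_ideal_cp_coeff[of "[:r:]" "take i xs" 0]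
    by (simp add: take_map)
  then show "r \<in> gen_ideal (take i xs)" by simp
qed

theorem corollary4p6:
  assumes "cohen_macaulay TYPE('a::comm_ring_1 poly)"
  shows "cohen_macaulay TYPE('a)"
  unfolding cohen_macaulay_def
proof (intro allI impI)
  fix xs :: "'a list"
  assume "strong_parameter_seq xs"
  then have "strong_parameter_seq (cp xs)"
    unfolding strong_parameter_seq_def by (auto simp: take_map intro: param_cp)
  then have "regular_seq (cp xs)" using assms unfolding cohen_macaulay_def by blast
  then show "regular_seq xs" by (rule regular_from_cp)
qed

end
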